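(* Let $\alpha>-1$ and for integers $0\le j\le k$ define $$a_{k,j}=(-1)^{k-j}\binom{k}{j}\frac{\Gamma(2\alpha+k+j+2)\Gamma(2\alpha+k+2)\Gamma(\alpha+k+1)}{\Gamma(2\alpha+2k+2)\Gamma(2\alpha+j+2)\Gamma(\alpha+j+1)},\quad \hat a_{k,j}=(-1)^{k-j}\binom{k}{j}\frac{\Gamma(2\alpha+k+j+2)\Gamma(2\alpha+k+2)\Gamma(\alpha+k+2)}{\Gamma(2\alpha+2k+2)\Gamma(2\alpha+j+2)\Gamma(\alpha+j+2)}.$$ Define for $k\in\mathbb{N}$ and $0\le i\le k$ the numbers $b_{k,i}$, $\hat b_{k,i}$ recursively by $b_{k,0}=\hat b_{k,0}=1$, $b_{k,i}=-\sum_{j=0}^{i-1}b_{k,j}a_{k-j,k-i}$, $\hat b_{k,i}=-\sum_{j=0}^{i-1}\hat b_{k,j}\hat a_{k-j,k-i}$. Then for all $0\le j\le k$, $$b_{k,j}=\binom{k}{j}\frac{\Gamma(2\alpha+k+2)\Gamma(\alpha+k+1)\Gamma(2\alpha+2k+3-2j)}{\Gamma(2\alpha+k+2-j)\Gamma(\alpha+k+1-j)\Gamma(2\alpha+2k+3-j)},\qquad \hat b_{k,j}=\binom{k}{j}\frac{\Gamma(2\alpha+k+2)\Gamma(\alpha+k+2)\Gamma(2\alpha+2k+3-2j)}{\Gamma(2\alpha+k+2-j)\Gamma(\alpha+k+2-j)\Gamma(2\alpha+2k+3-j)}.$$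
   Context: The numbers $a_{k,j}$ and $\hat a_{k,j}$ are the coefficients of $x^j$ in the monic Cauchy–Laguerre biorthogonal polynomials $p_k(x)$, $q_k(y)$ associated with the weight $x^{\alpha}y^{\alpha+1}e^{-x-y}/(x+y)$ on $(0,\infty)^2$. *)

theory Defs
  imports "HOL-Analysis.Analysis"
begin

definition a_coef :: "real \<Rightarrow> nat \<Rightarrow> nat \<Rightarrow> real" where
  "a_coef \<alpha> k j = (-1) ^ (k - j) * real (k choose j) *
     (Gamma (2*\<alpha> + real k + real j + 2) * Gamma (2*\<alpha> + real k + 2) * Gamma (\<alpha> + real k + 1)) /
     (Gamma (2*\<alpha> + 2 * real k + 2) * Gamma (2*\<alpha> + real j + 2) * Gamma (\<alpha> + real j + 1))"

definition ahat_coef :: "real \<Rightarrow> nat \<Rightarrow> nat \<Rightarrow> real" where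
  "ahat_coef \<alpha> k j = (-1) ^ (k - j) * real (k choose j) *
     (Gamma (2*\<alpha> + real k + real j + 2) * Gamma (2*\<alpha> + real k + 2) * Gamma (\<alpha> + real k + 2)) /
     (Gamma (2*\<alpha> + 2 * real k + 2) * Gamma (2*\<alpha> + real j + 2) * Gamma (\<alpha> + real j + 2))"

function binv :: "(nat \<Rightarrow> nat \<Rightarrow> real) \<Rightarrow> nat \<Rightarrow> nat \<Rightarrow> real" where
  "binv c k i = (if i = 0 then 1 else - (\<Sum>j<i. binv c k j * c (k - j) (k - i)))"
  by auto
termination by (relation "Wellfounded.measure (\<lambda>(c,k,i). i)") auto

definition b_coef :: "real \<Rightarrow> nat \<Rightarrow> nat \<Rightarrow> real" where
  "b_coef \<alpha> = binv (a_coef \<alpha>)"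

definition bhat_coef :: "real \<Rightarrow> nat \<Rightarrow> nat \<Rightarrow> real" where
  "bhat_coef \<alpha> = binv (ahat_coef \<alpha>)"

end

theory Submission
  imports Defs
begin
lemma binom_aux: "real (Suc j) * real (m choose Suc j) = (real m - real j) * real (m choose j)"
proof (cases "j < m")
  case True
  have "(m - j) * (m choose j) = Suc j * (m choose Suc j)"
    by (metis binomial_absorb_comp binomial_absorption)
  then have "real ((m - j) * (m choose j)) = real (Suc j * (m choose Suc j))" by simp
  then show ?thesis using True by (simp add: of_nat_diff algebra_simps)
next
  case False
  then have "m choose Suc j = 0" by simp
  moreover have "j > m \<Longrightarrow> m choose j = 0" by simp
  show ?thesis
  proof (cases "j = m")
    case False
    with \<open>\<not> j < m\<close> have "m < j" by simp
    then show ?thesis by (simp add: binomial_eq_0)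
  qed simp
qed
lemma Gp1: "(x::real) > 0 \<Longrightarrow> Gamma (x + 1) = x * Gamma x"
  by (rule Gamma_plus1) (auto simp: nonpos_Ints_def)

lemma tele:
  fixes N :: real and m :: nat
  assumes pos: "N - 2 * real (Suc m) > 0"
  shows "(\<Sum>j\<le>Suc m. (-1)^j * real (Suc m choose j) * (N - 2 * real j) *
            (Gamma (N - real (Suc m) - real j) / Gamma (N + 1 - real j))) = 0"
proof -
  define T where "T j = Gamma (N - real (Suc m) - real j) / Gamma (N + 1 - real j)" for j :: nat
  define U where "U j = (-1)^j * real (m choose j) * (N - real j) * T j" for j :: nat
  define F where "F j = (-1)^j * real (Suc m choose j) * (N - 2 * real j) * T j" for j :: nat
  have Tstep: "(N - real (Suc m) - real j - 1) * T (Suc j) = (N - real j) * T j" if "j \<le> m" for j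
  proof -
    have jm: "real j \<le> real m" using that by simp
    define x where "x = N - real (Suc m) - real j - 1"
    have x: "x > 0" using pos jm unfolding x_def by simp
    have e1: "N - real (Suc m) - real j = x + 1" by (simp add: x_def)
    have g1: "Gamma (N - real (Suc m) - real j) = x * Gamma x"
      unfolding e1 using Gp1[OF x] .
    have y: "N - real j - 1 > 0" using pos jm by simp
    have g2: "Gamma (N + 1 - real j) = (N - real j) * Gamma (N - real j)"
      using Gp1[of "N - real j"] y by (simp add: algebra_simps)
    have g3: "Gamma (N + 1 - real (Suc j)) = Gamma (N - real j)" by (simp add: algebra_simps)
    have g4: "Gamma (N - real (Suc m) - real (Suc j)) = Gamma x" by (simp add: x_def algebra_simps)
    have nz: "Gamma (N - real j) \<noteq> 0" proof -
      have "N - real j > 0" using y by simp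
      then have "Gamma (N - real j) > 0" by (rule Gamma_real_pos)
      then show ?thesis by simp
    qed
    have nz2: "N - real j \<noteq> 0" using y by simp
    show ?thesis unfolding T_def g1 g2 g3 g4 x_def[symmetric] using nz nz2 by (simp add: field_simps)
  qed
  have FU: "F (Suc j) = U (Suc j) - U j" if "j \<le> m" for j
  proof -
    have b: "real (Suc m choose Suc j) = real (m choose j) + real (m choose Suc j)" by simp
    have ba: "real (Suc j) * real (m choose Suc j) = (real m - real j) * real (m choose j)"
      by (rule binom_aux)
    have ba2: "((-1)^j * T (Suc j)) * (real (Suc j) * real (m choose Suc j)) = ((-1)^j * T (Suc j)) * ((real m - real j) * real (m choose j))"
      using ba by simp
    have "U (Suc j) - U j = (-1)^Suc j * (real (m choose Suc j) * (N - real j - 1) * T (Suc j)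
          + real (m choose j) * ((N - real (Suc m) - real j - 1) * T (Suc j)))"
      unfolding U_def Tstep[OF that] by (simp add: algebra_simps)
    also have "\<dots> = F (Suc j)"
      unfolding F_def b using ba2 by (simp add: algebra_simps)
    finally show ?thesis by simp
  qed
  have "(\<Sum>j\<le>Suc m. F j) = F 0 + (\<Sum>j\<le>m. F (Suc j))" by (rule sum.atMost_Suc_shift)
  also have "(\<Sum>j\<le>m. F (Suc j)) = (\<Sum>j<Suc m. U (Suc j) - U j)"
    using FU by (simp add: lessThan_Suc_atMost)
  also have "\<dots> = U (Suc m) - U 0" by (rule sum_lessThan_telescope)
  also have "U (Suc m) = 0" unfolding U_def by simp
  also have "F 0 = U 0" unfolding F_def U_def by simp
  finally show ?thesis unfolding F_def T_def by simp
qed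

definition Acf :: "real \<Rightarrow> real \<Rightarrow> nat \<Rightarrow> nat \<Rightarrow> real" where
  "Acf c d n m = (-1) ^ (n - m) * real (n choose m) *
     (Gamma (c + real n + real m) * Gamma (c + real n) * Gamma (d + real n)) /
     (Gamma (c + 2 * real n) * Gamma (c + real m) * Gamma (d + real m))"

definition Bf :: "real \<Rightarrow> real \<Rightarrow> nat \<Rightarrow> nat \<Rightarrow> real" where
  "Bf c d k j = real (k choose j) *
     (Gamma (c + real k) * Gamma (d + real k) * Gamma (c + 2 * real k + 1 - 2 * real j)) /
     (Gamma (c + real k - real j) * Gamma (d + real k - real j) * Gamma (c + 2 * real k + 1 - real j))"

lemma Gnz: assumes "(x::real) > 0" shows "Gamma x \<noteq> 0"
  using Gamma_real_pos[OF assms] by simp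

lemma alg:
  fixes b1 b2 b3 b4 A B x G7 P Q R S U V s t :: real
  assumes nz: "G7 \<noteq> 0" "P \<noteq> 0" "Q \<noteq> 0" "R \<noteq> 0" "U \<noteq> 0" "V \<noteq> 0"
    and bb: "b1 * b2 = b3 * b4"
  shows "b1 * (A * B * (x * G7)) / (P * Q * R) * ((s * t) * b2 * (S * P * Q) / (G7 * U * V))
       = s * (b3 * (A * B) / (U * V)) * (t * b4 * x * (S / R))"
proof -
  have "b1 * (A * B * (x * G7)) / (P * Q * R) * ((s * t) * b2 * (S * P * Q) / (G7 * U * V))
     = (b1 * b2) * (s * t * A * B * x * S / (U * V * R))"
    using nz by (simp add: field_simps)
  also have "\<dots> = (b3 * b4) * (s * t * A * B * x * S / (U * V * R))" by (simp only: bb)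
  also have "\<dots> = s * (b3 * (A * B) / (U * V)) * (t * b4 * x * (S / R))"
    using nz by (simp add: field_simps)
  finally show ?thesis .
qed

lemma prod_lemma:
  assumes c: "c > 0" and d: "d > 0" and ji: "j \<le> i" and ik: "i \<le> k"
  shows "Bf c d k j * Acf c d (k - j) (k - i) =
    (-1)^i * (real (k choose i) * (Gamma (c + real k) * Gamma (d + real k)) /
       (Gamma (c + real k - real i) * Gamma (d + real k - real i))) *
    ((-1)^j * real (i choose j) * (c + 2 * real k - 2 * real j) *
       (Gamma (c + 2 * real k - real i - real j) / Gamma (c + 2 * real k + 1 - real j)))"
proof -
  have rj: "real (k - j) = real k - real j" using ji ik by (simp add: of_nat_diff)
  have ri: "real (k - i) = real k - real i" using ik by (simp add: of_nat_diff)
  have jk: "real j \<le> real k" "real i \<le> real k" "real j \<le> real i" using ji ik by auto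
  have e1: "c + real (k - j) + real (k - i) = c + 2 * real k - real i - real j" unfolding rj ri by simp
  have e2: "c + real (k - j) = c + real k - real j" unfolding rj by simp
  have e3: "d + real (k - j) = d + real k - real j" unfolding rj by simp
  have e4: "c + 2 * real (k - j) = c + 2 * real k - 2 * real j" unfolding rj by simp
  have e5: "c + real (k - i) = c + real k - real i" unfolding ri by simp
  have e6: "d + real (k - i) = d + real k - real i" unfolding ri by simp
  have e7: "c + 2 * real k + 1 - 2 * real j = (c + 2 * real k - 2 * real j) + 1" by simp
  have g7: "Gamma (c + 2 * real k + 1 - 2 * real j) = (c + 2 * real k - 2 * real j) * Gamma (c + 2 * real k - 2 * real j)"
    unfolding e7 by (rule Gp1) (use c jk in simp)
  have bin: "real (k choose j) * real ((k - j) choose (k - i)) = real (k choose i) * real (i choose j)"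
  proof -
    have "(k - j) choose (k - i) = (k - j) choose (i - j)"
      using binomial_symmetric[of "k - i" "k - j"] ji ik by simp
    moreover have "(k choose i) * (i choose j) = (k choose j) * ((k - j) choose (i - j))"
      by (rule choose_mult[OF ji ik])
    ultimately show ?thesis by (metis of_nat_mult)
  qed
  have sg: "(-1::real) ^ (k - j - (k - i)) = (-1)^i * (-1)^j"
  proof -
    have "k - j - (k - i) = i - j" using ji ik by simp
    moreover have "(-1::real)^(i - j) = (-1)^i * (-1)^j"
    proof -
      have "(-1::real)^i = (-1)^(i-j) * (-1)^j" using ji by (metis le_add_diff_inverse2 power_add)
      then have "(-1::real)^i * (-1)^j = (-1)^(i-j) * ((-1)^j * (-1)^j)" by simp
      also have "(-1::real)^j * (-1)^j = 1" by (metis power_add power_minus1_even mult_2 [symmetric] even_mult_iff even_numeral mult.commute)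
      finally show ?thesis by simp
    qed
    ultimately show ?thesis by simp
  qed
  have nz: "Gamma (c + real k) \<noteq> 0" "Gamma (d + real k) \<noteq> 0"
    "Gamma (c + real k - real j) \<noteq> 0" "Gamma (d + real k - real j) \<noteq> 0"
    "Gamma (c + 2 * real k + 1 - real j) \<noteq> 0" "Gamma (c + 2 * real k - 2 * real j) \<noteq> 0"
    "Gamma (c + real k - real i) \<noteq> 0" "Gamma (d + real k - real i) \<noteq> 0"
    using c d jk by (auto intro!: Gnz)
  show ?thesis
    unfolding Bf_def Acf_def e1 unfolding e2 e3 e4 e5 e6 g7 sg
    by (rule alg[OF nz(6,3,4,5,7,8) bin])
qed

lemma sum_zero:
  assumes c: "c > 0" and d: "d > 0" and i1: "1 \<le> i" and ik: "i \<le> k"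
  shows "(\<Sum>j\<le>i. Bf c d k j * Acf c d (k - j) (k - i)) = 0"
proof -
  obtain m where im: "i = Suc m" using i1 by (cases i) auto
  define K where "K = (-1)^i * (real (k choose i) * (Gamma (c + real k) * Gamma (d + real k)) /
       (Gamma (c + real k - real i) * Gamma (d + real k - real i)))"
  define N where "N = c + 2 * real k"
  have "(\<Sum>j\<le>i. Bf c d k j * Acf c d (k - j) (k - i)) =
        (\<Sum>j\<le>i. K * ((-1)^j * real (i choose j) * (N - 2 * real j) *
       (Gamma (N - real i - real j) / Gamma (N + 1 - real j))))"
    by (rule sum.cong) (use c d ik in \<open>auto simp: prod_lemma K_def N_def\<close>)
  also have "\<dots> = K * (\<Sum>j\<le>i. (-1)^j * real (i choose j) * (N - 2 * real j) *
       (Gamma (N - real i - real j) / Gamma (N + 1 - real j)))"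
    by (simp add: sum_distrib_left)
  also have "(\<Sum>j\<le>i. (-1)^j * real (i choose j) * (N - 2 * real j) *
       (Gamma (N - real i - real j) / Gamma (N + 1 - real j))) = 0"
    unfolding im by (rule tele) (use c ik im in \<open>simp add: N_def\<close>)
  finally show ?thesis by simp
qed

lemma Acf_diag: "Acf c d n n = 1" if "c > 0" "d > 0"
proof -
  have e: "c + real n + real n = c + 2 * real n" by simp
  show ?thesis unfolding Acf_def e using that by (simp add: Gnz)
qed

lemma binv_Bf:
  assumes c: "c > 0" and d: "d > 0"
  shows "i \<le> k \<Longrightarrow> binv (Acf c d) k i = Bf c d k i"
proof (induction i rule: less_induct)
  case (less i)
  show ?case
  proof (cases "i = 0")
    case True
    have nz: "Gamma (c + real k) \<noteq> 0" "Gamma (d + real k) \<noteq> 0" "Gamma (c + 2 * real k + 1) \<noteq> 0"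
      using c d by (auto intro!: Gnz)
    show ?thesis using True nz by (simp add: Bf_def)
  next
    case False
    have "binv (Acf c d) k i = - (\<Sum>j<i. binv (Acf c d) k j * Acf c d (k - j) (k - i))"
      using False by (subst binv.simps) simp
    also have "\<dots> = - (\<Sum>j<i. Bf c d k j * Acf c d (k - j) (k - i))"
      using less by (intro arg_cong[where f=uminus] sum.cong) auto
    also have "\<dots> = Bf c d k i"
    proof -
      have "(\<Sum>j\<le>i. Bf c d k j * Acf c d (k - j) (k - i)) = 0"
        using sum_zero[OF c d _ less.prems] False by simp
      moreover have "(\<Sum>j\<le>i. Bf c d k j * Acf c d (k - j) (k - i)) =
          (\<Sum>j<i. Bf c d k j * Acf c d (k - j) (k - i)) + Bf c d k i"
        using Acf_diag[OF c d] by (simp add: lessThan_Suc_atMost[symmetric])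
      ultimately show ?thesis by simp
    qed
    finally show ?thesis .
  qed
qed

theorem mainTheorem4:
  fixes \<alpha> :: real and k j :: nat
  assumes "\<alpha> > -1" and "j \<le> k"
  shows "b_coef \<alpha> k j = real (k choose j) *
           (Gamma (2*\<alpha> + real k + 2) * Gamma (\<alpha> + real k + 1) * Gamma (2*\<alpha> + 2 * real k + 3 - 2 * real j)) /
           (Gamma (2*\<alpha> + real k + 2 - real j) * Gamma (\<alpha> + real k + 1 - real j) * Gamma (2*\<alpha> + 2 * real k + 3 - real j))
     \<and> bhat_coef \<alpha> k j = real (k choose j) *
           (Gamma (2*\<alpha> + real k + 2) * Gamma (\<alpha> + real k + 2) * Gamma (2*\<alpha> + 2 * real k + 3 - 2 * real j)) /
           (Gamma (2*\<alpha> + real k + 2 - real j) * Gamma (\<alpha> + real k + 2 - real j) * Gamma (2*\<alpha> + 2 * real k + 3 - real j))"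
proof -
  have c: "2*\<alpha> + 2 > 0" and d1: "\<alpha> + 1 > 0" and d2: "\<alpha> + 2 > 0" using assms by auto
  have A1: "a_coef \<alpha> = Acf (2*\<alpha> + 2) (\<alpha> + 1)"
    by (intro ext) (simp add: a_coef_def Acf_def algebra_simps)
  have A2: "ahat_coef \<alpha> = Acf (2*\<alpha> + 2) (\<alpha> + 2)"
    by (intro ext) (simp add: ahat_coef_def Acf_def algebra_simps)
  show ?thesis
    unfolding b_coef_def bhat_coef_def A1 A2 binv_Bf[OF c d1 assms(2)] binv_Bf[OF c d2 assms(2)]
    by (simp add: Bf_def algebra_simps)
qed
end
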